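(* Let $\beta<0$, $a,\gamma\in\mathbb{R}$, and let $\Omega\subset\mathbb{R}$ be a compact interval containing $0$ in its interior. Consider the control system on $\mathbb{R}^2$ $$\dot s=\beta(s-\omega),\qquad \dot t=(a\omega+\gamma)s,\qquad \omega\in\Omega .$$ Then: (1) If $\gamma\neq0$, the set $\Omega\times\mathbb{R}$ is the only control set of the system. (2) If $\gamma=0$ and $a\neq 0$, then for every $t\in\mathbb{R}$ the singleton $\{(0,t)\}$ is a control set of the system (and these are distinct control sets).
   Context: Controls are piecewise constant functions $\omega:\mathbb{R}\to\Omega$; $\varphi(\tau,\mathbf v,\omega)$ is the solution at time $\tau$ from $\mathbf v$, and $\mathcal O^+(\mathbf v)$ is the set of points reachable from $\mathbf v$ in nonnegative time. A control set is a nonempty set $\mathcal C\subset\mathbb{R}^2$, maximal with respect to inclusion, such that (i) for every $x\in\mathcal C$ there is a control $\omega$ with $\varphi(\tau,x,\omega)\in\mathcal C$ for all $\tau\ge0$, and (ii) $\mathcal C\subset\overline{\mathcal O^+(x)}$ for all $x\in\mathcal C$. *)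

theory Defs
  imports "HOL-Analysis.Analysis"
begin

definition piecewise_constant :: "(real \<Rightarrow> real) \<Rightarrow> bool" where
  "piecewise_constant w \<longleftrightarrow>
     (\<forall>a b. \<exists>S. finite S \<and>
        (\<forall>x y. a \<le> x \<longrightarrow> x \<le> y \<longrightarrow> y \<le> b \<longrightarrow> {x..y} \<inter> S = {} \<longrightarrow> w x = w y))"

definition admissible :: "real set \<Rightarrow> (real \<Rightarrow> real) \<Rightarrow> bool" where
  "admissible U w \<longleftrightarrow> piecewise_constant w \<and> (\<forall>r. w r \<in> U)"

text \<open>\<open>x\<close> is the solution (in nonnegative time) from \<open>v\<close> under control \<open>w\<close>,
  in the Caratheodory (integral equation) sense.\<close>
definition is_solution ::
  "(real \<Rightarrow> real \<times> real \<Rightarrow> real \<times> real) \<Rightarrow> (real \<Rightarrow> real) \<Rightarrow> real \<times> real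
     \<Rightarrow> (real \<Rightarrow> real \<times> real) \<Rightarrow> bool" where
  "is_solution f w v x \<longleftrightarrow>
     x 0 = v \<and> (\<forall>\<tau>\<ge>0. ((\<lambda>r. f (w r) (x r)) has_integral (x \<tau> - v)) {0..\<tau>})"

definition reach_pos ::
  "(real \<Rightarrow> real \<times> real \<Rightarrow> real \<times> real) \<Rightarrow> real set \<Rightarrow> real \<times> real \<Rightarrow> (real \<times> real) set" where
  "reach_pos f U v = {x \<tau> | x w \<tau>. admissible U w \<and> is_solution f w v x \<and> \<tau> \<ge> 0}"

definition controlled_invariant_core ::
  "(real \<Rightarrow> real \<times> real \<Rightarrow> real \<times> real) \<Rightarrow> real set \<Rightarrow> (real \<times> real) set \<Rightarrow> bool" where
  "controlled_invariant_core f U C \<longleftrightarrow>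
     C \<noteq> {} \<and>
     (\<forall>v\<in>C. \<exists>w x. admissible U w \<and> is_solution f w v x \<and> (\<forall>\<tau>\<ge>0. x \<tau> \<in> C)) \<and>
     (\<forall>v\<in>C. C \<subseteq> closure (reach_pos f U v))"

definition control_set ::
  "(real \<Rightarrow> real \<times> real \<Rightarrow> real \<times> real) \<Rightarrow> real set \<Rightarrow> (real \<times> real) set \<Rightarrow> bool" where
  "control_set f U C \<longleftrightarrow> controlled_invariant_core f U C \<and>
     (\<forall>D. C \<subseteq> D \<longrightarrow> controlled_invariant_core f U D \<longrightarrow> D = C)"

definition sys :: "real \<Rightarrow> real \<Rightarrow> real \<Rightarrow> real \<Rightarrow> real \<times> real \<Rightarrow> real \<times> real" where
  "sys \<beta> a \<gamma> u p = (\<beta> * (fst p - u), (a * u + \<gamma>) * fst p)"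

end

theory Submission
  imports Defs
begin


lemma vd_fst:
  assumes "(x has_vector_derivative d) F"
  shows "((\<lambda>r. fst (x r)) has_real_derivative fst d) F"
proof -
  have "((\<lambda>r. fst (x r)) has_derivative (\<lambda>h. fst (h *\<^sub>R d))) F"
    using assms unfolding has_vector_derivative_def by (rule has_derivative_fst)
  then show ?thesis unfolding has_field_derivative_def by (simp add: mult_commute_abs)
qed

lemma vd_snd:
  assumes "(x has_vector_derivative d) F"
  shows "((\<lambda>r. snd (x r)) has_real_derivative snd d) F"
proof -
  have "((\<lambda>r. snd (x r)) has_derivative (\<lambda>h. snd (h *\<^sub>R d))) F"
    using assms unfolding has_vector_derivative_def by (rule has_derivative_snd)
  then show ?thesis unfolding has_field_derivative_def by (simp add: mult_commute_abs)
qed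

lemma sol_of_deriv:
  assumes "x 0 = v" "continuous_on {0..} x" "finite S"
    "\<And>r. r > 0 \<Longrightarrow> r \<notin> S \<Longrightarrow> (x has_vector_derivative f (w r) (x r)) (at r)"
  shows "is_solution f w v x"
  unfolding is_solution_def
proof (intro conjI allI impI)
  show "x 0 = v" by fact
  fix \<tau> :: real assume "\<tau> \<ge> 0"
  have "((\<lambda>r. f (w r) (x r)) has_integral (x \<tau> - x 0)) {0..\<tau>}"
    apply (rule fundamental_theorem_of_calculus_interior_strong[OF assms(3) \<open>\<tau> \<ge> 0\<close>])
    using assms(4) apply auto[1]
    using assms(2) by (rule continuous_on_subset) auto
  then show "((\<lambda>r. f (w r) (x r)) has_integral (x \<tau> - v)) {0..\<tau>}" using assms(1) by simp
qed

definition traj :: "real \<Rightarrow> real \<Rightarrow> real \<Rightarrow> real \<Rightarrow> real \<times> real \<Rightarrow> real \<Rightarrow> real \<times> real" where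
  "traj b a g c p \<tau> = (c + (fst p - c) * exp (b * \<tau>),
      snd p + (a * c + g) * (c * \<tau> + (fst p - c) / b * (exp (b * \<tau>) - 1)))"

lemma traj_0[simp]: "traj b a g c p 0 = p"
  by (simp add: traj_def)

lemma traj_deriv:
  assumes "b \<noteq> 0"
  shows "(traj b a g c p has_vector_derivative sys b a g c (traj b a g c p \<tau>)) (at \<tau> within X)"
proof -
  have 1: "((\<lambda>\<tau>. c + (fst p - c) * exp (b * \<tau>)) has_real_derivative (b * ((fst p - c) * exp (b * \<tau>)))) (at \<tau> within X)"
    by (auto intro!: derivative_eq_intros)
  have 2: "((\<lambda>\<tau>. snd p + (a * c + g) * (c * \<tau> + (fst p - c) / b * (exp (b * \<tau>) - 1))) has_real_derivative
     ((a * c + g) * (c + (fst p - c) * exp (b * \<tau>)))) (at \<tau> within X)"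
    using assms by (auto intro!: derivative_eq_intros simp: field_simps assms)
  show ?thesis
    unfolding traj_def sys_def
    using has_vector_derivative_Pair[OF 1[unfolded has_real_derivative_iff_has_vector_derivative]
       2[unfolded has_real_derivative_iff_has_vector_derivative]]
    by (simp add: algebra_simps)
qed

lemma traj_cont: "continuous_on X (traj b a g c p)"
  unfolding traj_def by (intro continuous_intros)

lemma pc_const: "piecewise_constant (\<lambda>_. c)"
  unfolding piecewise_constant_def by auto

lemma pc_two: "piecewise_constant (\<lambda>r. if r < T then c1 else c2)"
  unfolding piecewise_constant_def
proof (intro allI)
  fix a b :: real
  show "\<exists>S. finite S \<and> (\<forall>x y. a \<le> x \<longrightarrow> x \<le> y \<longrightarrow> y \<le> b \<longrightarrow> {x..y} \<inter> S = {} \<longrightarrow>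
     (if x < T then c1 else c2) = (if y < T then c1 else c2))"
    by (rule exI[of _ "{T}"]) auto
qed

lemma traj_sol:
  assumes "b \<noteq> 0"
  shows "is_solution (sys b a g) (\<lambda>_. c) p (traj b a g c p)"
  by (rule sol_of_deriv[where S="{}" and f="sys b a g" and w="\<lambda>_. c"]) (auto simp: traj_cont traj_deriv[OF assms])



lemma sol_regular:
  assumes adm: "admissible U w" and sol: "is_solution (sys b a g) w v x" and T: "T > 0"
  shows "\<exists>S. finite S \<and> continuous_on {0..T} x \<and>
    (\<forall>r\<in>{0<..<T} - S. (x has_vector_derivative sys b a g (w r) (x r)) (at r))"
proof -
  define G where "G = (\<lambda>r. sys b a g (w r) (x r))"
  have int: "(G has_integral (x \<tau> - v)) {0..\<tau>}" if "\<tau> \<ge> 0" for \<tau>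
    using sol that unfolding is_solution_def G_def by auto
  have xeq: "x u = v + integral {0..u} G" if "u \<in> {0..T}" for u
    using integral_unique[OF int[of u]] that by auto
  have Gint: "G integrable_on {0..T}" using int[of T] T by auto
  have "continuous_on {0..T} (\<lambda>u. v + integral {0..u} G)"
    by (intro continuous_intros indefinite_integral_continuous_1 Gint)
  then have xc: "continuous_on {0..T} x"
    by (rule continuous_on_eq) (simp add: xeq)
  obtain S where S: "finite S" and wS: "\<And>y z. 0 \<le> y \<Longrightarrow> y \<le> z \<Longrightarrow> z \<le> T \<Longrightarrow> {y..z} \<inter> S = {} \<Longrightarrow> w y = w z"
    using adm unfolding admissible_def piecewise_constant_def by meson
  have "(x has_vector_derivative G r) (at r)" if r: "r \<in> {0<..<T} - S" for r
  proof -
    obtain d where d: "d > 0" "\<forall>y\<in>S. y \<noteq> r \<longrightarrow> d \<le> dist r y"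
      using finite_set_avoid[OF S, of r] by blast
    define e where "e = min d (min r (T - r))"
    have e: "e > 0" using d r by (auto simp: e_def)
    have wloc: "w y = w r" if y: "dist y r < e" for y
    proof (cases "y \<le> r")
      case True
      have "{y..r} \<inter> S = {}"
      proof (rule ccontr)
        assume "{y..r} \<inter> S \<noteq> {}"
        then obtain z where z: "z \<in> S" "y \<le> z" "z \<le> r" by auto
        have "z \<noteq> r" using z r by auto
        then have "d \<le> dist r z" using d z by auto
        moreover have "dist r z < e" using y z True by (auto simp: dist_real_def)
        ultimately show False by (simp add: e_def)
      qed
      moreover have "0 \<le> y" using y True by (auto simp: dist_real_def e_def)
      ultimately show ?thesis using wS[of y r] True r by auto
    next
      case False
      have "{r..y} \<inter> S = {}"
      proof (rule ccontr)
        assume "{r..y} \<inter> S \<noteq> {}"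
        then obtain z where z: "z \<in> S" "r \<le> z" "z \<le> y" by auto
        have "z \<noteq> r" using z r by auto
        then have "d \<le> dist r z" using d z by auto
        moreover have "dist r z < e" using y z False by (auto simp: dist_real_def)
        ultimately show False by (simp add: e_def)
      qed
      moreover have "y \<le> T" using y False by (auto simp: dist_real_def e_def)
      ultimately show ?thesis using wS[of r y] False r by auto
    qed
    have rin: "r \<in> {0..T}" using r by auto
    have "continuous (at r within {0..T}) x"
      using xc rin by (simp add: continuous_on_eq_continuous_within)
    then have "continuous (at r within {0..T}) (\<lambda>y. sys b a g (w r) (x y))"
      unfolding sys_def by (intro continuous_intros)
    then have Gc: "continuous (at r within {0..T}) G"
      by (rule continuous_transform_within[OF _ e rin]) (simp add: G_def wloc)
    have "((\<lambda>u. integral {0..u} G) has_vector_derivative G r) (at r within ({0..T} - {}))"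
      by (rule integral_has_vector_derivative_continuous_at[OF Gint]) (use rin Gc in auto)
    moreover have "at r within {0..T} = at r"
      by (rule at_within_interior) (use r in auto)
    ultimately have "((\<lambda>u. integral {0..u} G) has_vector_derivative G r) (at r)" by simp
    then have "((\<lambda>u. v + integral {0..u} G) has_vector_derivative 0 + G r) (at r)"
      by (intro has_vector_derivative_add has_vector_derivative_const)
    then have "((\<lambda>u. v + integral {0..u} G) has_vector_derivative G r) (at r)" by simp
    then show ?thesis
      by (rule has_vector_derivative_transform_within_open[of _ _ _ "{0<..<T}"]) (use r xeq in auto)
  qed
  then show ?thesis using S xc unfolding G_def by blast
qed

lemma mono_fin:
  fixes h h' :: "real \<Rightarrow> real"
  assumes "finite S" "0 \<le> T" "continuous_on {0..T} h"
    "\<And>r. r \<in> {0<..<T} - S \<Longrightarrow> (h has_real_derivative h' r) (at r)"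
    "\<And>r. r \<in> {0..T} \<Longrightarrow> h' r \<ge> 0"
  shows "h 0 \<le> h T"
proof -
  have "(h' has_integral (h T - h 0)) {0..T}"
    using assms(1-4) by (intro fundamental_theorem_of_calculus_interior_strong)
      (auto simp: has_real_derivative_iff_has_vector_derivative)
  then have "0 \<le> h T - h 0" by (rule has_integral_nonneg) (use assms(5) in auto)
  then show ?thesis by simp
qed

lemma adm_range: "admissible U w \<Longrightarrow> w r \<in> U"
  unfolding admissible_def by auto

lemma strip_bounds:
  assumes b: "b < 0" and adm: "admissible {u1..u2} w" and sol: "is_solution (sys b a g) w v x" and \<tau>: "\<tau> \<ge> 0"
  shows "fst (x \<tau>) - u2 \<le> exp (b * \<tau>) * (fst v - u2)" "exp (b * \<tau>) * (fst v - u1) \<le> fst (x \<tau>) - u1"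
proof -
  have x0: "x 0 = v" using sol unfolding is_solution_def by auto
  have "fst (x \<tau>) - u2 \<le> exp (b * \<tau>) * (fst v - u2) \<and> exp (b * \<tau>) * (fst v - u1) \<le> fst (x \<tau>) - u1"
  proof (cases "\<tau> = 0")
    case True then show ?thesis using x0 by simp
  next
    case False
    then have T: "\<tau> > 0" using \<tau> by simp
    obtain S where S: "finite S" and xc: "continuous_on {0..\<tau>} x" and
      xd: "\<And>r. r\<in>{0<..<\<tau>} - S \<Longrightarrow> (x has_vector_derivative sys b a g (w r) (x r)) (at r)"
      using sol_regular[OF adm sol T] by blast
    have ds: "((\<lambda>r. fst (x r)) has_real_derivative b * (fst (x r) - w r)) (at r)" if "r\<in>{0<..<\<tau>} - S" for r
      using vd_fst[OF xd[OF that]] by (simp add: sys_def)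
    have fc: "continuous_on {0..\<tau>} (\<lambda>r. fst (x r))" by (rule continuous_on_fst[OF xc])
    have wr: "u1 \<le> w r" "w r \<le> u2" for r using adm_range[OF adm, of r] by auto
    have 1: "- (exp (- b * 0) * (fst (x 0) - u2)) \<le> - (exp (- b * \<tau>) * (fst (x \<tau>) - u2))"
    proof (rule mono_fin[OF S \<tau>, where h' = "\<lambda>r. - (exp (- b * r) * b * (u2 - w r))"])
      show "continuous_on {0..\<tau>} (\<lambda>r. - (exp (- b * r) * (fst (x r) - u2)))"
        by (intro continuous_intros xc)
      fix r assume r: "r \<in> {0<..<\<tau>} - S"
      show "((\<lambda>r. - (exp (- b * r) * (fst (x r) - u2))) has_real_derivative - (exp (- b * r) * b * (u2 - w r))) (at r)"
        by (rule derivative_eq_intros ds[OF r] refl)+ (simp add: algebra_simps)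
    next
      fix r assume "r \<in> {0..\<tau>}"
      have "b * (u2 - w r) \<le> 0" using b wr[of r] by (simp add: mult_nonpos_nonneg)
      then show "0 \<le> - (exp (- b * r) * b * (u2 - w r))"
        by (simp add: mult.assoc mult_nonneg_nonpos)
    qed
    have 2: "exp (- b * 0) * (fst (x 0) - u1) \<le> exp (- b * \<tau>) * (fst (x \<tau>) - u1)"
    proof (rule mono_fin[OF S \<tau>, where h' = "\<lambda>r. exp (- b * r) * b * (u1 - w r)"])
      show "continuous_on {0..\<tau>} (\<lambda>r. exp (- b * r) * (fst (x r) - u1))"
        by (intro continuous_intros xc)
      fix r assume r: "r \<in> {0<..<\<tau>} - S"
      show "((\<lambda>r. exp (- b * r) * (fst (x r) - u1)) has_real_derivative exp (- b * r) * b * (u1 - w r)) (at r)"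
        by (rule derivative_eq_intros ds[OF r] refl)+ (simp add: algebra_simps)
    next
      fix r assume "r \<in> {0..\<tau>}"
      have "0 \<le> b * (u1 - w r)" using b wr[of r] by (simp add: mult_nonpos_nonpos)
      then show "0 \<le> exp (- b * r) * b * (u1 - w r)"
        by (simp add: mult.assoc)
    qed
    have e: "exp (b * \<tau>) * exp (- b * \<tau>) = 1" by (simp add: exp_minus_inverse[symmetric] exp_add[symmetric])
    have h1: "exp (b * \<tau>) * (exp (- b * \<tau>) * (fst (x \<tau>) - u2)) \<le> exp (b * \<tau>) * (fst v - u2)"
      using 1 x0 by (intro mult_left_mono) auto
    have h2: "exp (b * \<tau>) * (fst v - u1) \<le> exp (b * \<tau>) * (exp (- b * \<tau>) * (fst (x \<tau>) - u1))"
      using 2 x0 by (intro mult_left_mono) auto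
    have h3: "exp (b * \<tau>) * (exp (- b * \<tau>) * Y) = Y" for Y
      by (metis e mult.assoc mult_1)
    show ?thesis using h1 h2 h3[of "fst (x \<tau>) - u2"] h3[of "fst (x \<tau>) - u1"] by linarith
  qed
  then show "fst (x \<tau>) - u2 \<le> exp (b * \<tau>) * (fst v - u2)" "exp (b * \<tau>) * (fst v - u1) \<le> fst (x \<tau>) - u1"
    by auto
qed



lemma reach_elim:
  assumes "q \<in> reach_pos f U v"
  obtains x w \<tau> where "q = x \<tau>" "admissible U w" "is_solution f w v x" "\<tau> \<ge> 0"
  using assms unfolding reach_pos_def by blast

lemma reach_intro:
  assumes "admissible U w" "is_solution f w v x" "\<tau> \<ge> 0"
  shows "x \<tau> \<in> reach_pos f U v"
  unfolding reach_pos_def using assms by blast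

lemma reach_strip:
  assumes b: "b < 0" and v: "fst v \<in> {u1..u2}"
  shows "reach_pos (sys b a g) {u1..u2} v \<subseteq> {u1..u2} \<times> UNIV"
proof
  fix q assume "q \<in> reach_pos (sys b a g) {u1..u2} v"
  then obtain x w \<tau> where q: "q = x \<tau>" "admissible {u1..u2} w" "is_solution (sys b a g) w v x" "\<tau> \<ge> 0"
    by (rule reach_elim)
  note sb = strip_bounds[OF b q(2) q(3) q(4)]
  have "exp (b * \<tau>) * (fst v - u2) \<le> 0" using v by (simp add: mult_nonneg_nonpos)
  moreover have "exp (b * \<tau>) * (fst v - u1) \<ge> 0" using v by simp
  ultimately show "q \<in> {u1..u2} \<times> UNIV" using sb q(1) by (auto simp: mem_Times_iff)
qed

lemma reach_upper:
  assumes b: "b < 0"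
  shows "reach_pos (sys b a g) {u1..u2} v \<subseteq> {q. fst q \<le> max (fst v) u2}"
proof
  fix q assume "q \<in> reach_pos (sys b a g) {u1..u2} v"
  then obtain x w \<tau> where q: "q = x \<tau>" "admissible {u1..u2} w" "is_solution (sys b a g) w v x" "\<tau> \<ge> 0"
    by (rule reach_elim)
  note sb = strip_bounds[OF b q(2) q(3) q(4)]
  have e: "exp (b * \<tau>) \<le> 1" using b q(4) by (simp add: mult_nonpos_nonneg)
  have "exp (b * \<tau>) * (fst v - u2) \<le> max (fst v) u2 - u2"
  proof (cases "fst v \<le> u2")
    case True then show ?thesis by (simp add: mult_nonneg_nonpos)
  next
    case False
    then have "exp (b * \<tau>) * (fst v - u2) \<le> 1 * (fst v - u2)" using e by (intro mult_right_mono) auto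
    then show ?thesis by simp
  qed
  then show "q \<in> {q. fst q \<le> max (fst v) u2}" using sb q(1) by simp
qed

lemma reach_lower:
  assumes b: "b < 0"
  shows "reach_pos (sys b a g) {u1..u2} v \<subseteq> {q. min (fst v) u1 \<le> fst q}"
proof
  fix q assume "q \<in> reach_pos (sys b a g) {u1..u2} v"
  then obtain x w \<tau> where q: "q = x \<tau>" "admissible {u1..u2} w" "is_solution (sys b a g) w v x" "\<tau> \<ge> 0"
    by (rule reach_elim)
  note sb = strip_bounds[OF b q(2) q(3) q(4)]
  have e: "exp (b * \<tau>) \<le> 1" using b q(4) by (simp add: mult_nonpos_nonneg)
  have "min (fst v) u1 - u1 \<le> exp (b * \<tau>) * (fst v - u1)"
  proof (cases "u1 \<le> fst v")
    case True then show ?thesis by simp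
  next
    case False
    then have "1 * (fst v - u1) \<le> exp (b * \<tau>) * (fst v - u1)" using e by (intro mult_right_mono_neg) auto
    then show ?thesis by simp
  qed
  then show "q \<in> {q. min (fst v) u1 \<le> fst q}" using sb q(1) by simp
qed

lemma V_mono:
  assumes b: "b < 0" and a: "a \<noteq> 0" and adm: "admissible {u1..u2} w"
    and sol: "is_solution (sys b a 0) w v x" and \<tau>: "\<tau> \<ge> 0"
  shows "snd v / a + (fst v)^2 / (2*b) \<le> snd (x \<tau>) / a + (fst (x \<tau>))^2 / (2*b)"
proof (cases "\<tau> = 0")
  case True then show ?thesis using sol unfolding is_solution_def by simp
next
  case False
  then have T: "\<tau> > 0" using \<tau> by simp
  have x0: "x 0 = v" using sol unfolding is_solution_def by auto
  obtain S where S: "finite S" and xc: "continuous_on {0..\<tau>} x" and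
    xd: "\<And>r. r\<in>{0<..<\<tau>} - S \<Longrightarrow> (x has_vector_derivative sys b a 0 (w r) (x r)) (at r)"
    using sol_regular[OF adm sol T] by blast
  have ds: "((\<lambda>r. fst (x r)) has_real_derivative b * (fst (x r) - w r)) (at r)" if "r\<in>{0<..<\<tau>} - S" for r
    using vd_fst[OF xd[OF that]] by (simp add: sys_def)
  have dt: "((\<lambda>r. snd (x r)) has_real_derivative (a * w r) * fst (x r)) (at r)" if "r\<in>{0<..<\<tau>} - S" for r
    using vd_snd[OF xd[OF that]] by (simp add: sys_def)
  have "snd (x 0) / a + (fst (x 0))^2 / (2*b) \<le> snd (x \<tau>) / a + (fst (x \<tau>))^2 / (2*b)"
  proof (rule mono_fin[OF S \<tau>, where h' = "\<lambda>r. (fst (x r))^2"])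
    show "continuous_on {0..\<tau>} (\<lambda>r. snd (x r) / a + (fst (x r))^2 / (2*b))"
      by (intro continuous_intros xc) (use a b in auto)
    fix r assume r: "r \<in> {0<..<\<tau>} - S"
    show "((\<lambda>r. snd (x r) / a + (fst (x r))^2 / (2*b)) has_real_derivative (fst (x r))^2) (at r)"
      using a b by (auto intro!: derivative_eq_intros ds[OF r] dt[OF r] simp: field_simps power2_eq_square)
  qed simp
  then show ?thesis using x0 by simp
qed

lemma H_mono:
  assumes b: "b < 0" and a: "a \<noteq> 0" and u: "u1 < 0" "0 < u2" and adm: "admissible {u1..u2} w"
    and sol: "is_solution (sys b a 0) w v x" and \<tau>: "\<tau> \<ge> 0" and v: "fst v \<in> {u1..u2}"
  shows "snd v / a + (fst v)^2 / (2*b) - (fst v)^4 / (4*b*(u2-u1)^2)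
     \<le> snd (x \<tau>) / a + (fst (x \<tau>))^2 / (2*b) - (fst (x \<tau>))^4 / (4*b*(u2-u1)^2)"
proof (cases "\<tau> = 0")
  case True then show ?thesis using sol unfolding is_solution_def by simp
next
  case False
  define M where "M = u2 - u1"
  have M: "M > 0" using u by (simp add: M_def)
  then have "M^2 > 0" by simp
  then have "4*b*M^2 \<noteq> 0" using b by simp
  then have bM: "4*b*(u2-u1)^2 \<noteq> 0" by (simp add: M_def)
  then have T: "\<tau> > 0" using \<tau> False by simp
  have x0: "x 0 = v" using sol unfolding is_solution_def by auto
  obtain S where S: "finite S" and xc: "continuous_on {0..\<tau>} x" and
    xd: "\<And>r. r\<in>{0<..<\<tau>} - S \<Longrightarrow> (x has_vector_derivative sys b a 0 (w r) (x r)) (at r)"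
    using sol_regular[OF adm sol T] by blast
  have ds: "((\<lambda>r. fst (x r)) has_real_derivative b * (fst (x r) - w r)) (at r)" if "r\<in>{0<..<\<tau>} - S" for r
    using vd_fst[OF xd[OF that]] by (simp add: sys_def)
  have dt: "((\<lambda>r. snd (x r)) has_real_derivative (a * w r) * fst (x r)) (at r)" if "r\<in>{0<..<\<tau>} - S" for r
    using vd_snd[OF xd[OF that]] by (simp add: sys_def)
  have "snd (x 0) / a + (fst (x 0))^2 / (2*b) - (fst (x 0))^4 / (4*b*M^2)
     \<le> snd (x \<tau>) / a + (fst (x \<tau>))^2 / (2*b) - (fst (x \<tau>))^4 / (4*b*M^2)"
  proof (rule mono_fin[OF S \<tau>, where h' = "\<lambda>r. (fst (x r))^2 * (1 - fst (x r) * (fst (x r) - w r) / M^2)"])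
    show "continuous_on {0..\<tau>} (\<lambda>r. snd (x r) / a + (fst (x r))^2 / (2*b) - (fst (x r))^4 / (4*b*M^2))"
      by (intro continuous_intros xc) (use a b M in auto)
    fix r assume r: "r \<in> {0<..<\<tau>} - S"
    show "((\<lambda>r. snd (x r) / a + (fst (x r))^2 / (2*b) - (fst (x r))^4 / (4*b*M^2)) has_real_derivative
        (fst (x r))^2 * (1 - fst (x r) * (fst (x r) - w r) / M^2)) (at r)"
      using a b M by (auto intro!: derivative_eq_intros ds[OF r] dt[OF r] simp: field_simps power2_eq_square eval_nat_numeral)
  next
    fix r assume r: "r \<in> {0..\<tau>}"
    have "x r \<in> reach_pos (sys b a 0) {u1..u2} v"
      using adm sol r by (intro reach_intro) auto
    then have sr: "fst (x r) \<in> {u1..u2}" using reach_strip[OF b v, of a 0] by auto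
    have wr: "w r \<in> {u1..u2}" by (rule adm_range[OF adm])
    have "\<bar>fst (x r)\<bar> \<le> M" "\<bar>fst (x r) - w r\<bar> \<le> M" using sr wr u by (auto simp: M_def)
    then have "\<bar>fst (x r)\<bar> * \<bar>fst (x r) - w r\<bar> \<le> M * M" by (intro mult_mono) auto
    then have "fst (x r) * (fst (x r) - w r) \<le> M^2"
      by (metis abs_ge_self abs_mult order_trans power2_eq_square)
    then have "fst (x r) * (fst (x r) - w r) / M^2 \<le> 1" using \<open>M^2 > 0\<close> by simp
    then show "0 \<le> (fst (x r))^2 * (1 - fst (x r) * (fst (x r) - w r) / M^2)" by simp
  qed
  then show ?thesis using x0 by (simp add: M_def)
qed



lemma traj_deriv_shift:
  assumes "b \<noteq> 0"
  shows "((\<lambda>\<tau>. traj b a g c p (\<tau> - T)) has_vector_derivative sys b a g c (traj b a g c p (r - T))) (at r)"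
proof -
  have 1: "((\<lambda>\<tau>. c + (fst p - c) * exp (b * (\<tau> - T))) has_real_derivative (b * ((fst p - c) * exp (b * (r - T))))) (at r)"
    by (auto intro!: derivative_eq_intros)
  have 2: "((\<lambda>\<tau>. snd p + (a * c + g) * (c * (\<tau> - T) + (fst p - c) / b * (exp (b * (\<tau> - T)) - 1))) has_real_derivative
     ((a * c + g) * (c + (fst p - c) * exp (b * (r - T))))) (at r)"
    using assms by (auto intro!: derivative_eq_intros simp: field_simps assms)
  show ?thesis
    unfolding traj_def sys_def
    using has_vector_derivative_Pair[OF 1[unfolded has_real_derivative_iff_has_vector_derivative]
       2[unfolded has_real_derivative_iff_has_vector_derivative]]
    by (simp add: algebra_simps)
qed

lemma two_phase_sol:
  assumes b: "b \<noteq> 0" and T: "T \<ge> 0"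
  shows "is_solution (sys b a g) (\<lambda>r. if r < T then c1 else c2) v
    (\<lambda>\<tau>. if \<tau> \<le> T then traj b a g c1 v \<tau> else traj b a g c2 (traj b a g c1 v T) (\<tau> - T))"
proof (rule sol_of_deriv[where S="{T}"])
  show "(if 0 \<le> T then traj b a g c1 v 0 else traj b a g c2 (traj b a g c1 v T) (0 - T)) = v"
    using T by simp
  show "continuous_on {0..} (\<lambda>\<tau>. if \<tau> \<le> T then traj b a g c1 v \<tau> else traj b a g c2 (traj b a g c1 v T) (\<tau> - T))"
  proof (rule continuous_on_cases_le[where h="\<lambda>x. x" and a=T, simplified])
    show "continuous_on {x \<in> {0..}. x \<le> T} (traj b a g c1 v)" by (rule traj_cont)
    show "continuous_on {x \<in> {0..}. T \<le> x} (\<lambda>x. traj b a g c2 (traj b a g c1 v T) (x - T))"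
      unfolding traj_def by (intro continuous_intros)
  qed simp
  show "finite {T}" by simp
  fix r :: real assume r: "r > 0" "r \<notin> {T}"
  show "((\<lambda>\<tau>. if \<tau> \<le> T then traj b a g c1 v \<tau> else traj b a g c2 (traj b a g c1 v T) (\<tau> - T))
     has_vector_derivative sys b a g (if r < T then c1 else c2)
       ((\<lambda>\<tau>. if \<tau> \<le> T then traj b a g c1 v \<tau> else traj b a g c2 (traj b a g c1 v T) (\<tau> - T)) r)) (at r)"
  proof (cases "r < T")
    case True
    have "(traj b a g c1 v has_vector_derivative sys b a g c1 (traj b a g c1 v r)) (at r)"
      by (rule traj_deriv[OF b])
    then have "((\<lambda>\<tau>. if \<tau> \<le> T then traj b a g c1 v \<tau> else traj b a g c2 (traj b a g c1 v T) (\<tau> - T))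
       has_vector_derivative sys b a g c1 (traj b a g c1 v r)) (at r)"
      by (rule has_vector_derivative_transform_within_open[of _ _ _ "{..<T}"]) (use True in auto)
    then show ?thesis using True by simp
  next
    case False
    then have rT: "r > T" using r by auto
    have "((\<lambda>\<tau>. traj b a g c2 (traj b a g c1 v T) (\<tau> - T)) has_vector_derivative
        sys b a g c2 (traj b a g c2 (traj b a g c1 v T) (r - T))) (at r)"
      by (rule traj_deriv_shift[OF b])
    then have "((\<lambda>\<tau>. if \<tau> \<le> T then traj b a g c1 v \<tau> else traj b a g c2 (traj b a g c1 v T) (\<tau> - T))
       has_vector_derivative sys b a g c2 (traj b a g c2 (traj b a g c1 v T) (r - T))) (at r)"
      by (rule has_vector_derivative_transform_within_open[of _ _ _ "{T<..}"]) (use rT in auto)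
    then show ?thesis using rT by simp
  qed
qed

lemma exists_c:
  fixes a g u1 u2 :: real
  assumes g: "g \<noteq> 0" and u: "u1 < 0" "0 < u2"
  shows "\<exists>c\<in>{u1..u2}. (a*c+g)*c > 0" "\<exists>c\<in>{u1..u2}. (a*c+g)*c < 0"
proof -
  define \<delta> where "\<delta> = min (min u2 (-u1)) (\<bar>g\<bar> / (2*(\<bar>a\<bar>+1)))"
  have gp: "\<bar>g\<bar> > 0" using g by simp
  have dp: "\<delta> > 0" using u gp unfolding \<delta>_def by (auto intro!: divide_pos_pos)
  have dI: "\<delta> \<in> {u1..u2}" "-\<delta> \<in> {u1..u2}" using dp u unfolding \<delta>_def by auto
  have "\<delta> \<le> \<bar>g\<bar> / (2*(\<bar>a\<bar>+1))" unfolding \<delta>_def by simp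
  then have "\<delta> * (2*(\<bar>a\<bar>+1)) \<le> \<bar>g\<bar>" by (simp add: pos_le_divide_eq)
  then have "\<bar>a\<bar> * \<delta> < \<bar>g\<bar>" using dp by (simp add: algebra_simps)
  then have ad: "\<bar>a * \<delta>\<bar> < \<bar>g\<bar>" using dp by (simp add: abs_mult)
  have "(\<exists>c\<in>{u1..u2}. (a*c+g)*c > 0) \<and> (\<exists>c\<in>{u1..u2}. (a*c+g)*c < 0)"
  proof (cases "g > 0")
    case True
    have "a*\<delta>+g > 0" "a*(-\<delta>)+g > 0" using ad True by auto
    then have "(a*\<delta>+g)*\<delta> > 0" "(a*(-\<delta>)+g)*(-\<delta>) < 0" using dp
      by (auto intro: mult_pos_pos mult_pos_neg)
    then show ?thesis using dI by blast
  next
    case False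
    then have gn: "g < 0" using g by simp
    have "a*\<delta>+g < 0" "a*(-\<delta>)+g < 0" using ad gn by auto
    then have "(a*\<delta>+g)*\<delta> < 0" "(a*(-\<delta>)+g)*(-\<delta>) > 0" using dp
      by (auto intro: mult_neg_pos mult_neg_neg)
    then show ?thesis using dI by blast
  qed
  then show "\<exists>c\<in>{u1..u2}. (a*c+g)*c > 0" "\<exists>c\<in>{u1..u2}. (a*c+g)*c < 0" by auto
qed

lemma ivt_lin:
  fixes P Q k t1 b :: real
  assumes b: "b < 0" and k: "k \<noteq> 0" and side: "(k > 0 \<and> P + Q \<le> t1) \<or> (k < 0 \<and> t1 \<le> P + Q)"
  shows "\<exists>T\<ge>0. P + Q * exp (b * T) + k * T = t1"
proof -
  define f where "f = (\<lambda>T. P + Q * exp (b * T) + k * T)"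
  define T0 where "T0 = (\<bar>t1\<bar> + \<bar>P\<bar> + \<bar>Q\<bar>) / \<bar>k\<bar>"
  have T0: "T0 \<ge> 0" unfolding T0_def by simp
  have kT: "\<bar>k\<bar> * T0 = \<bar>t1\<bar> + \<bar>P\<bar> + \<bar>Q\<bar>" using k unfolding T0_def by simp
  have e: "exp (b * T0) \<le> 1" using b T0 by (simp add: mult_nonpos_nonneg)
  have "\<bar>Q * exp (b * T0)\<bar> \<le> \<bar>Q\<bar> * 1" unfolding abs_mult using e by (intro mult_left_mono) auto
  then have Qb: "\<bar>Q * exp (b * T0)\<bar> \<le> \<bar>Q\<bar>" by simp
  have cont: "continuous_on {0..T0} f" unfolding f_def by (intro continuous_intros)
  have f0: "f 0 = P + Q" unfolding f_def by simp
  show ?thesis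
  proof (cases "k > 0")
    case True
    then have "P + Q \<le> t1" using side by auto
    moreover have "t1 \<le> f T0"
    proof -
      have "k * T0 = \<bar>t1\<bar> + \<bar>P\<bar> + \<bar>Q\<bar>" using kT True by simp
      moreover have "- (Q * exp (b * T0)) \<le> \<bar>Q\<bar>" using Qb by (rule abs_le_D2)
      moreover have "- P \<le> \<bar>P\<bar>" "t1 \<le> \<bar>t1\<bar>" by auto
      ultimately show ?thesis unfolding f_def by linarith
    qed
    ultimately obtain T where "0 \<le> T" "T \<le> T0" "f T = t1"
      using IVT'[of f 0 t1 T0] cont T0 f0 by auto
    then show ?thesis unfolding f_def by blast
  next
    case False
    then have kn: "k < 0" using k by simp
    then have "t1 \<le> P + Q" using side by auto
    moreover have "f T0 \<le> t1"
    proof -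
      have "k * T0 = - (\<bar>t1\<bar> + \<bar>P\<bar> + \<bar>Q\<bar>)" using kT kn by simp
      moreover have "Q * exp (b * T0) \<le> \<bar>Q\<bar>" using Qb by (rule abs_le_D1)
      moreover have "P \<le> \<bar>P\<bar>" "- t1 \<le> \<bar>t1\<bar>" by auto
      ultimately show ?thesis unfolding f_def by linarith
    qed
    moreover have "continuous_on {0..T0} (\<lambda>T. - f T)" using cont by (intro continuous_intros)
    ultimately obtain T where "0 \<le> T" "T \<le> T0" "- f T = - t1"
      using IVT'[of "\<lambda>T. - f T" 0 "-t1" T0] T0 f0 by auto
    then show ?thesis unfolding f_def by auto
  qed
qed



lemma traj_snd_formula:
  assumes b: "b \<noteq> 0"
  shows "snd (traj b a g sx (traj b a g c v T) L) =
    (snd v - (a*c+g)*(fst v - c)/b + (a * sx+g)*(sx*L + (c - sx)/b*(exp (b*L) - 1)))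
    + ((a*c+g)*(fst v - c)/b + (a * sx+g)*((fst v - c)/b)*(exp (b*L) - 1)) * exp (b*T)
    + ((a*c+g)*c) * T"
  unfolding traj_def using b by (simp add: field_simps)

lemma ctrl:
  assumes b: "b < 0" and u: "u1 < 0" "0 < u2" and g: "g \<noteq> 0"
    and v: "fst v \<in> {u1..u2}" and q: "fst q \<in> {u1..u2}"
  shows "q \<in> closure (reach_pos (sys b a g) {u1..u2} v)"
  unfolding closure_approachable
proof (intro allI impI)
  fix \<epsilon> :: real assume \<epsilon>: "\<epsilon> > 0"
  have b0: "b \<noteq> 0" using b by simp
  define sx where "sx = fst q"
  define D where "D = u2 - u1"
  have D: "D > 0" using u by (simp add: D_def)
  define \<eta> where "\<eta> = \<epsilon> / (D + 1)"
  have \<eta>: "\<eta> > 0" using \<epsilon> D by (simp add: \<eta>_def)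
  define L where "L = \<bar>ln \<eta>\<bar> / (- b) + 1"
  have L: "L > 0" using b by (simp add: L_def divide_nonneg_pos add_nonneg_pos)
  have "b * L = - \<bar>ln \<eta>\<bar> + b" using b by (simp add: L_def field_simps)
  then have "b * L < ln \<eta>" using b by linarith
  then have EL: "exp (b * L) < \<eta>" using \<eta> by (metis exp_less_mono exp_ln)
  define Fn where "Fn = (\<lambda>c T. traj b a g sx (traj b a g c v T) L)"
  have inreach: "Fn c T \<in> reach_pos (sys b a g) {u1..u2} v" if c: "c \<in> {u1..u2}" and T: "T \<ge> 0" for c T
  proof -
    have adm: "admissible {u1..u2} (\<lambda>r. if r < T then c else sx)"
      unfolding admissible_def using pc_two c q by (auto simp: sx_def)
    have "(\<lambda>\<tau>. if \<tau> \<le> T then traj b a g c v \<tau> else traj b a g sx (traj b a g c v T) (\<tau> - T)) (T + L)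
        \<in> reach_pos (sys b a g) {u1..u2} v"
      by (rule reach_intro[OF adm two_phase_sol[OF b0 T]]) (use T L in auto)
    then show ?thesis using L by (simp add: Fn_def)
  qed
  have close: "dist (fst (Fn c T)) sx < \<epsilon>" if c: "c \<in> {u1..u2}" and T: "T \<ge> 0" for c T
  proof -
    have adm: "admissible {u1..u2} (\<lambda>_. c)" unfolding admissible_def using pc_const c by auto
    have "traj b a g c v T \<in> reach_pos (sys b a g) {u1..u2} v"
      by (rule reach_intro[OF adm traj_sol[OF b0] T])
    then have p: "fst (traj b a g c v T) \<in> {u1..u2}" using reach_strip[OF b v, of a g] by (auto simp: mem_Times_iff)
    have "fst (Fn c T) - sx = (fst (traj b a g c v T) - sx) * exp (b * L)"
      by (simp add: Fn_def traj_def)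
    then have "dist (fst (Fn c T)) sx = \<bar>fst (traj b a g c v T) - sx\<bar> * exp (b * L)"
      by (simp add: dist_real_def abs_mult)
    also have "\<dots> \<le> D * exp (b * L)" using p q by (intro mult_right_mono) (auto simp: D_def sx_def)
    also have "\<dots> \<le> D * \<eta>" using EL D by simp
    also have "\<dots> < \<epsilon>" using D \<epsilon> by (simp add: \<eta>_def field_simps)
    finally show ?thesis .
  qed
  define A where "A = snd (traj b a g sx v L)"
  obtain c where c: "c \<in> {u1..u2}" and kc: "((a*c+g)*c > 0 \<and> A \<le> snd q) \<or> ((a*c+g)*c < 0 \<and> snd q \<le> A)"
  proof (cases "A \<le> snd q")
    case True
    then show ?thesis using exists_c(1)[OF g u, of a] that by auto
  next
    case False
    then show ?thesis using exists_c(2)[OF g u, of a] that by auto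
  qed
  define P where "P = snd v - (a*c+g)*(fst v - c)/b + (a * sx+g)*(sx*L + (c - sx)/b*(exp (b*L) - 1))"
  define Q where "Q = (a*c+g)*(fst v - c)/b + (a * sx+g)*((fst v - c)/b)*(exp (b*L) - 1)"
  have form: "snd (Fn c T) = P + Q * exp (b * T) + ((a*c+g)*c) * T" for T
    unfolding Fn_def P_def Q_def by (rule traj_snd_formula[OF b0])
  have "P + Q = A" using form[of 0] by (simp add: A_def Fn_def)
  then have "(((a*c+g)*c) > 0 \<and> P + Q \<le> snd q) \<or> (((a*c+g)*c) < 0 \<and> snd q \<le> P + Q)" using kc by auto
  then obtain T where T: "T \<ge> 0" "P + Q * exp (b * T) + ((a*c+g)*c) * T = snd q"
    using ivt_lin[OF b, of "(a*c+g)*c" P Q "snd q"] by fastforce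
  have sndeq: "snd (Fn c T) = snd q" using form T by simp
  have "dist (Fn c T) q = dist (fst (Fn c T)) sx"
    using sndeq unfolding sx_def by (cases "Fn c T", cases q) (simp add: dist_Pair_Pair)
  then show "\<exists>y\<in>reach_pos (sys b a g) {u1..u2} v. dist y q < \<epsilon>"
    using inreach[OF c T(1)] close[OF c T(1)] by metis
qed



lemma strip_core:
  assumes b: "b < 0" and u: "u1 < 0" "0 < u2" and g: "g \<noteq> 0"
  shows "controlled_invariant_core (sys b a g) {u1..u2} ({u1..u2} \<times> UNIV)"
  unfolding controlled_invariant_core_def
proof (intro conjI ballI)
  show "{u1..u2} \<times> (UNIV::real set) \<noteq> {}" using u by auto
next
  fix v :: "real \<times> real" assume v: "v \<in> {u1..u2} \<times> UNIV"
  have b0: "b \<noteq> 0" using b by simp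
  have adm: "admissible {u1..u2} (\<lambda>_. fst v)" unfolding admissible_def using pc_const v by auto
  have "\<forall>\<tau>\<ge>0. traj b a g (fst v) v \<tau> \<in> {u1..u2} \<times> UNIV" using v by (auto simp: traj_def mem_Times_iff)
  then show "\<exists>w x. admissible {u1..u2} w \<and> is_solution (sys b a g) w v x \<and> (\<forall>\<tau>\<ge>0. x \<tau> \<in> {u1..u2} \<times> UNIV)"
    using adm traj_sol[OF b0] by blast
  show "{u1..u2} \<times> UNIV \<subseteq> closure (reach_pos (sys b a g) {u1..u2} v)"
  proof
    fix q assume "q \<in> {u1..u2} \<times> (UNIV::real set)"
    then show "q \<in> closure (reach_pos (sys b a g) {u1..u2} v)"
      using ctrl[OF b u g, where v=v and q=q and a=a] v by (auto simp: mem_Times_iff)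
  qed
qed

lemma strip_closed: "closed ({u1..u2::real} \<times> (UNIV :: real set))"
  by (intro closed_Times closed_atLeastAtMost closed_UNIV)

lemma part1:
  assumes b: "b < 0" and u: "u1 < 0" "0 < u2" and g: "g \<noteq> 0"
  shows "control_set (sys b a g) {u1..u2} ({u1..u2} \<times> UNIV) \<and>
         (\<forall>C. control_set (sys b a g) {u1..u2} C \<longrightarrow> C = {u1..u2} \<times> UNIV)"
proof -
  let ?S = "{u1..u2} \<times> (UNIV :: real set)"
  have core: "controlled_invariant_core (sys b a g) {u1..u2} ?S" by (rule strip_core[OF b u g])
  have max: "D = ?S" if "?S \<subseteq> D" "controlled_invariant_core (sys b a g) {u1..u2} D" for D
  proof
    have z: "(0, 0) \<in> D" using that(1) u by auto
    have "D \<subseteq> closure (reach_pos (sys b a g) {u1..u2} (0,0))"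
      using that(2) z unfolding controlled_invariant_core_def by blast
    also have "\<dots> \<subseteq> ?S"
      by (rule closure_minimal[OF reach_strip[OF b] strip_closed]) (use u in auto)
    finally show "D \<subseteq> ?S" .
  qed (use that in auto)
  have sub: "C \<subseteq> ?S" if C: "control_set (sys b a g) {u1..u2} C" for C
  proof
    fix v assume vC: "v \<in> C"
    have cc: "controlled_invariant_core (sys b a g) {u1..u2} C" using C unfolding control_set_def by auto
    obtain w x where adm: "admissible {u1..u2} w" and sol: "is_solution (sys b a g) w v x"
      and inv: "\<forall>\<tau>\<ge>0. x \<tau> \<in> C"
      using cc vC unfolding controlled_invariant_core_def by blast
    have p: "x 1 \<in> C" using inv by auto
    have vcl: "v \<in> closure (reach_pos (sys b a g) {u1..u2} (x 1))"
      using cc p vC unfolding controlled_invariant_core_def by blast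
    note sb = strip_bounds[OF b adm sol, of 1]
    have e1: "exp b < 1" using b by simp
    have "fst v \<le> u2"
    proof (rule ccontr)
      assume "\<not> fst v \<le> u2"
      then have gt: "fst v > u2" by simp
      have "exp b * (fst v - u2) < 1 * (fst v - u2)" using e1 gt by (intro mult_strict_right_mono) auto
      then have lt: "fst (x 1) < fst v" using sb(1) by simp
      have cl: "closed {q :: real \<times> real. fst q \<le> max (fst (x 1)) u2}"
        by (intro closed_Collect_le continuous_intros)
      have "v \<in> {q. fst q \<le> max (fst (x 1)) u2}"
        using closure_minimal[OF reach_upper[OF b] cl] vcl by blast
      then show False using lt gt by auto
    qed
    moreover have "u1 \<le> fst v"
    proof (rule ccontr)
      assume "\<not> u1 \<le> fst v"
      then have lt0: "fst v < u1" by simp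
      have "1 * (fst v - u1) < exp b * (fst v - u1)" using e1 lt0 by (intro mult_strict_right_mono_neg) auto
      then have lt: "fst v < fst (x 1)" using sb(2) by simp
      have cl: "closed {q :: real \<times> real. min (fst (x 1)) u1 \<le> fst q}"
        by (intro closed_Collect_le continuous_intros)
      have "v \<in> {q. min (fst (x 1)) u1 \<le> fst q}"
        using closure_minimal[OF reach_lower[OF b] cl] vcl by blast
      then show False using lt lt0 by auto
    qed
    ultimately show "v \<in> ?S" by (auto simp: mem_Times_iff)
  qed
  show ?thesis
  proof (intro conjI allI impI)
    show "control_set (sys b a g) {u1..u2} ?S" unfolding control_set_def using core max by auto
    fix C assume C: "control_set (sys b a g) {u1..u2} C"
    have "?S = C" using C sub[OF C] core unfolding control_set_def by blast
    then show "C = ?S" by simp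
  qed
qed

lemma part2:
  assumes b: "b < 0" and u: "u1 < 0" "0 < u2" and a: "a \<noteq> 0"
  shows "control_set (sys b a 0) {u1..u2} {(0, t)}"
proof -
  have b0: "b \<noteq> 0" using b by simp
  have adm0: "admissible {u1..u2} (\<lambda>_. 0)" unfolding admissible_def using pc_const u by auto
  have tr: "traj b a 0 0 (0, t) \<tau> = (0, t)" for \<tau> by (simp add: traj_def)
  have sol0: "is_solution (sys b a 0) (\<lambda>_. 0) (0, t) (traj b a 0 0 (0, t))" by (rule traj_sol[OF b0])
  have core: "controlled_invariant_core (sys b a 0) {u1..u2} {(0, t)}"
    unfolding controlled_invariant_core_def
  proof (intro conjI ballI)
    show "{(0::real, t)} \<noteq> {}" by simp
    fix v assume "v \<in> {(0::real, t)}"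
    then have v: "v = (0, t)" by simp
    show "\<exists>w x. admissible {u1..u2} w \<and> is_solution (sys b a 0) w v x \<and> (\<forall>\<tau>\<ge>0. x \<tau> \<in> {(0, t)})"
      using adm0 sol0 tr v by auto
    have "traj b a 0 0 (0, t) 0 \<in> reach_pos (sys b a 0) {u1..u2} (0, t)"
      by (rule reach_intro[OF adm0 sol0]) simp
    then show "{(0, t)} \<subseteq> closure (reach_pos (sys b a 0) {u1..u2} v)"
      using v closure_subset by (auto simp: tr)
  qed
  define M where "M = u2 - u1"
  define V where "V = (\<lambda>q :: real \<times> real. snd q / a + (fst q)^2 / (2*b))"
  define H where "H = (\<lambda>q :: real \<times> real. snd q / a + (fst q)^2 / (2*b) - (fst q)^4 / (4*b*(u2-u1)^2))"
  have M: "M > 0" using u by (simp add: M_def)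
  have max: "D \<subseteq> {(0, t)}" if D: "{(0, t)} \<subseteq> D" "controlled_invariant_core (sys b a 0) {u1..u2} D" for D
  proof
    fix p assume pD: "p \<in> D"
    have z: "(0, t) \<in> D" using D by auto
    have p1: "p \<in> closure (reach_pos (sys b a 0) {u1..u2} (0, t))"
      using D(2) z pD unfolding controlled_invariant_core_def by blast
    have p2: "(0, t) \<in> closure (reach_pos (sys b a 0) {u1..u2} p)"
      using D(2) z pD unfolding controlled_invariant_core_def by blast
    have f0: "fst (0::real, t) \<in> {u1..u2}" using u by simp
    have pS: "p \<in> {u1..u2} \<times> UNIV"
      using closure_minimal[OF reach_strip[OF b f0, of a 0] strip_closed] p1 by auto
    have r1: "reach_pos (sys b a 0) {u1..u2} (0, t) \<subseteq> {q. V (0, t) \<le> V q}"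
    proof
      fix q assume "q \<in> reach_pos (sys b a 0) {u1..u2} (0, t)"
      then obtain x w \<tau> where q: "q = x \<tau>" "admissible {u1..u2} w" "is_solution (sys b a 0) w (0, t) x" "\<tau> \<ge> 0"
        by (rule reach_elim)
      show "q \<in> {q. V (0, t) \<le> V q}" using V_mono[OF b a q(2) q(3) q(4)] q(1) by (simp add: V_def)
    qed
    have clV: "closed {q. V (0, t) \<le> V q}" unfolding V_def
      by (intro closed_Collect_le continuous_intros) (use a b in auto)
    have Vp: "V (0, t) \<le> V p" using closure_minimal[OF r1 clV] p1 by auto
    have r2: "reach_pos (sys b a 0) {u1..u2} p \<subseteq> {q. H p \<le> H q}"
    proof
      fix q assume "q \<in> reach_pos (sys b a 0) {u1..u2} p"
      then obtain x w \<tau> where q: "q = x \<tau>" "admissible {u1..u2} w" "is_solution (sys b a 0) w p x" "\<tau> \<ge> 0"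
        by (rule reach_elim)
      have "fst p \<in> {u1..u2}" using pS by (auto simp: mem_Times_iff)
      then show "q \<in> {q. H p \<le> H q}" using H_mono[OF b a u q(2) q(3) q(4)] q(1) by (simp add: H_def)
    qed
    have "4*b*(u2-u1)^2 \<noteq> 0" using b u by simp
    then have clH: "closed {q. H p \<le> H q}" unfolding H_def
      by (intro closed_Collect_le continuous_intros) (use a b in auto)
    have Hp: "H p \<le> H (0, t)" using closure_minimal[OF r2 clH] p2 by auto
    have neg: "4*b*(u2-u1)^2 < 0" using b u by (simp add: mult_neg_pos)
    have "H p = V p - (fst p)^4 / (4*b*(u2-u1)^2)" by (simp add: H_def V_def)
    moreover have "H (0, t) = V (0, t)" by (simp add: H_def V_def)
    ultimately have "- ((fst p)^4 / (4*b*(u2-u1)^2)) \<le> 0" using Vp Hp by linarith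
    then have "0 \<le> (fst p)^4 / (4*b*(u2-u1)^2)" by linarith
    then have "(fst p)^4 \<le> 0" using neg by (auto simp: zero_le_divide_iff)
    then have "(fst p)^4 = 0" by (simp add: order_antisym)
    then have s0: "fst p = 0" by simp
    then have "V p = snd p / a" by (simp add: V_def)
    moreover have "H p = snd p / a" using s0 by (simp add: H_def)
    moreover have "V (0, t) = t / a" "H (0, t) = t / a" by (simp_all add: V_def H_def)
    ultimately have "snd p / a = t / a" using Vp Hp by linarith
    then have "snd p = t" using a by simp
    then show "p \<in> {(0, t)}" using s0 by (cases p) auto
  qed
  show ?thesis unfolding control_set_def using core max by blast
qed


theorem theorem2:
  fixes \<beta> a \<gamma> u1 u2 :: real
  assumes "\<beta> < 0" and "u1 < 0" and "0 < u2"
  shows "(\<gamma> \<noteq> 0 \<longrightarrow>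
            control_set (sys \<beta> a \<gamma>) {u1..u2} ({u1..u2} \<times> UNIV) \<and>
            (\<forall>C. control_set (sys \<beta> a \<gamma>) {u1..u2} C \<longrightarrow> C = {u1..u2} \<times> UNIV))
       \<and> (\<gamma> = 0 \<and> a \<noteq> 0 \<longrightarrow>
            (\<forall>t. control_set (sys \<beta> a \<gamma>) {u1..u2} {(0, t)}) \<and>
            (\<forall>t t' :: real. t \<noteq> t' \<longrightarrow> {(0::real, t)} \<noteq> {(0, t')}))"
  using part1[OF assms] part2[OF assms] by auto

end
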